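(* For all $n\ge0$, $$F_n(x,y,q)=\sum_{k\ge0}x^{n-2k}y^kq^{\binom k2+\binom{n-k}2}\begin{bmatrix}n-k\\k\end{bmatrix}_q.$$ More precisely, for each $k$, the sum of $q^{rb(\pi)}$ over those $\pi\in\Pi_n(13/2,123)$ with exactly $k$ two-element blocks equals $q^{\binom k2+\binom{n-k}2}\begin{bmatrix}n-k\\k\end{bmatrix}_q$.
   Context: $\Pi_n(13/2,123)$ is the set of layered matchings of $[n]$: set partitions whose blocks are consecutive intervals $[1,i_1]/\dots/[i_{k-1}+1,n]$, each of size $1$ or $2$. $\Pi_0(13/2,123)$ consists of the empty partition. For $\pi=B_1/\dots/B_k$ with $\min B_1<\dots<\min B_k$, $rb(\pi)$ is the number of pairs $(b,B_j)$ with $b\in B_i$, $j>i$, $\max B_j>b$. Let $s(\pi)$ and $d(\pi)$ be the numbers of blocks of size $1$ and $2$. Define $F_n(x,y,q)=\sum_{\pi\in\Pi_n(13/2,123)}x^{s(\pi)}y^{d(\pi)}q^{rb(\pi)}$. The $q$-binomial coefficient is $\begin{bmatrix}n\\k\end{bmatrix}_q=\prod_{i=1}^k\frac{q^{n-i+1}-1}{q^i-1}$ for $0\le k\le n$, and it is $0$ if $k>n$. *)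

theory Defs
  imports Main "HOL-Library.Disjoint_Sets"
begin

text \<open>Layered matchings of [n]: set partitions of {1..n} whose blocks are
  intervals of size 1 or 2 (a partition into intervals is automatically
  of the form [1,i_1]/.../[i_(k-1)+1,n]).\<close>
definition layered_matchings :: "nat \<Rightarrow> nat set set set" where
  "layered_matchings n = {P. partition_on {1..n} P \<and>
     (\<forall>B\<in>P. \<exists>a b. B = {a..b} \<and> (card B = 1 \<or> card B = 2))}"

text \<open>rb: pairs (b, B_j) with b in B_i, j > i (i.e. min B_j > min B_i), max B_j > b.\<close>
definition rb :: "nat set set \<Rightarrow> nat" where
  "rb P = card {(b, C). \<exists>B\<in>P. b \<in> B \<and> C \<in> P \<and> Min B < Min C \<and> b < Max C}"

definition singles :: "nat set set \<Rightarrow> nat" where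
  "singles P = card {B\<in>P. card B = 1}"

definition doubles :: "nat set set \<Rightarrow> nat" where
  "doubles P = card {B\<in>P. card B = 2}"

definition F :: "nat \<Rightarrow> 'a::comm_ring_1 \<Rightarrow> 'a \<Rightarrow> 'a \<Rightarrow> 'a" where
  "F n x y q = (\<Sum>P\<in>layered_matchings n. x ^ singles P * y ^ doubles P * q ^ rb P)"

definition qbinom :: "'a::field \<Rightarrow> nat \<Rightarrow> nat \<Rightarrow> 'a" where
  "qbinom q n k = (if k \<le> n then (\<Prod>i=1..k. (q ^ (n - i + 1) - 1) / (q ^ i - 1)) else 0)"

end

theory Submission
  imports Defs
begin


definition NN :: "'a::field \<Rightarrow> nat \<Rightarrow> nat \<Rightarrow> 'a" where
  "NN q m k = (\<Prod>i<k. q ^ (m - i) - 1)"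
definition DD :: "'a::field \<Rightarrow> nat \<Rightarrow> 'a" where
  "DD q k = (\<Prod>i<k. q ^ (Suc i) - 1)"

lemma qbinom_alt: "k \<le> m \<Longrightarrow> qbinom q m k = NN q m k / DD q k"
proof -
  assume km: "k \<le> m"
  have "qbinom q m k = (\<Prod>i\<in>{Suc 0..k}. (q ^ (m - i + 1) - 1) / (q ^ i - 1))"
    unfolding qbinom_def using km by simp
  also have "\<dots> = (\<Prod>i<k. (q ^ (m - Suc i + 1) - 1) / (q ^ Suc i - 1))"
    by (rule prod.atLeast1_atMost_eq)
  also have "\<dots> = (\<Prod>i<k. (q ^ (m - i) - 1) / (q ^ Suc i - 1))"
  proof (rule prod.cong)
    fix i assume "i \<in> {..<k}"
    hence "m - Suc i + 1 = m - i" using km by auto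
    thus "(q ^ (m - Suc i + 1) - 1) / (q ^ Suc i - 1) = (q ^ (m - i) - 1) / (q ^ Suc i - 1)" by simp
  qed simp
  finally show ?thesis by (simp add: prod_dividef NN_def DD_def)
qed

lemma DD_nz: "\<forall>i\<in>{1..k}. q ^ i \<noteq> 1 \<Longrightarrow> DD q k \<noteq> 0"
  unfolding DD_def by (auto simp: prod_zero_iff) (use Suc_leI in force)

lemma qbinom_0[simp]: "qbinom q m 0 = 1"
  by (simp add: qbinom_def)

lemma qbinom_gt[simp]: "m < k \<Longrightarrow> qbinom q m k = 0"
  by (simp add: qbinom_def)

lemma qpascal:
  fixes q :: "'a::field"
  assumes "\<forall>i\<in>{1..k}. q ^ i \<noteq> 1" "1 \<le> k" "k \<le> m"
  shows "qbinom q m k = q ^ k * qbinom q (m - 1) k + qbinom q (m - 1) (k - 1)"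
proof -
  obtain j where kj: "k = Suc j" using assms(2) by (cases k) auto
  obtain l where ml: "m = Suc l" using assms by (cases m) auto
  have jl: "j \<le> l" using assms kj ml by simp
  have D: "DD q (Suc j) = DD q j * (q ^ Suc j - 1)" by (simp add: DD_def)
  have Dn: "DD q (Suc j) \<noteq> 0" using DD_nz assms(1) kj by blast
  have Dj: "DD q j \<noteq> 0" using Dn D by auto
  have qk: "q ^ Suc j - 1 \<noteq> 0" using Dn D by auto
  have N1: "NN q (Suc l) (Suc j) = (q ^ Suc l - 1) * NN q l j"
    by (simp add: NN_def prod.lessThan_Suc_shift del: prod.lessThan_Suc)
  show ?thesis
  proof (cases "j = l")
    case True
    have "qbinom q m k = NN q (Suc l) (Suc l) / DD q (Suc l)" using kj ml True by (simp add: qbinom_alt)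
    also have "\<dots> = (q ^ Suc l - 1) * NN q l l / (DD q l * (q ^ Suc l - 1))"
      using N1 D True by simp
    also have "\<dots> = NN q l l / DD q l" using qk True by simp
    finally show ?thesis using kj ml True by (simp add: qbinom_alt)
  next
    case False
    hence jl': "Suc j \<le> l" using jl by simp
    have N2: "NN q l (Suc j) = NN q l j * (q ^ (l - j) - 1)" by (simp add: NN_def)
    have e: "q ^ Suc j * (q ^ (l - j) - 1) + (q ^ Suc j - 1) = q ^ Suc l - 1"
      using jl' by (simp add: algebra_simps flip: power_add)
    have "q ^ k * qbinom q (m - 1) k + qbinom q (m - 1) (k - 1)
       = q ^ Suc j * (NN q l j * (q ^ (l - j) - 1)) / (DD q j * (q ^ Suc j - 1)) + NN q l j / DD q j"
      using kj ml jl jl' by (simp add: qbinom_alt N2 D)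
    also have "\<dots> = NN q l j * (q ^ Suc j * (q ^ (l - j) - 1) + (q ^ Suc j - 1)) / (DD q j * (q ^ Suc j - 1))"
      using Dj qk by (simp add: field_simps)
    also have "\<dots> = qbinom q m k"
      using kj ml jl by (simp only: e) (simp add: qbinom_alt N1 D mult.commute)
    finally show ?thesis by simp
  qed
qed


abbreviation LM where "LM \<equiv> layered_matchings"

lemma LM_props:
  assumes "P \<in> LM m"
  shows "\<Union>P = {1..m}" "\<And>B. B \<in> P \<Longrightarrow> B \<noteq> {} \<and> B \<subseteq> {1..m} \<and> finite B"
        "finite P" "disjoint P"
proof -
  have pa: "partition_on {1..m} P" using assms by (simp add: layered_matchings_def)
  show U: "\<Union>P = {1..m}" using partition_onD1[OF pa] by simp
  show "\<And>B. B \<in> P \<Longrightarrow> B \<noteq> {} \<and> B \<subseteq> {1..m} \<and> finite B"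
    using partition_onD3[OF pa] U by (auto intro: finite_subset)
  show "finite P" using U by (metis finite_UnionD finite_atLeastAtMost)
  show "disjoint P" using partition_onD2[OF pa] .
qed

lemma LM_finite: "finite (LM m)"
proof -
  have "LM m \<subseteq> Pow (Pow {1..m})" using LM_props(2) by blast
  thus ?thesis by (rule finite_subset) simp
qed

lemma LM_0: "LM 0 = {{}}"
  by (auto simp: layered_matchings_def partition_on_empty)

definition blk :: "nat \<Rightarrow> nat \<Rightarrow> nat set" where "blk m c = {Suc m..m+c}"

lemma blk_notin: "P \<in> LM m \<Longrightarrow> 1 \<le> c \<Longrightarrow> blk m c \<notin> P"
  using LM_props(2)[of P m "blk m c"] by (auto simp: blk_def)

lemma card_blk[simp]: "card (blk m c) = c" by (simp add: blk_def)

lemma add_block: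
  assumes P: "P \<in> LM m" and c: "c = 1 \<or> c = 2"
  shows "insert (blk m c) P \<in> LM (m + c)"
proof -
  have U: "\<Union>P = {1..m}" using LM_props(1)[OF P] .
  have pa: "partition_on {1..m} P" using P by (simp add: layered_matchings_def)
  have dj: "disjnt (blk m c) (\<Union>P)" using U by (auto simp: blk_def disjnt_def)
  have e: "{1..m + c} - blk m c = {1..m}" using c by (auto simp: blk_def)
  have "partition_on {1..m + c} (insert (blk m c) P)"
    unfolding partition_on_insert[OF dj] e using pa c by (auto simp: blk_def)
  moreover have "\<forall>B\<in>insert (blk m c) P. \<exists>a b. B = {a..b} \<and> (card B = 1 \<or> card B = 2)"
    using P c by (auto simp: layered_matchings_def blk_def)
  ultimately show ?thesis by (simp add: layered_matchings_def)
qed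

lemma remove_block:
  assumes Q: "Q \<in> LM N" and N: "1 \<le> N"
  shows "\<exists>c. (c = 1 \<or> c = 2) \<and> c \<le> N \<and> blk (N - c) c \<in> Q \<and> Q - {blk (N - c) c} \<in> LM (N - c)"
proof -
  have U: "\<Union>Q = {1..N}" using LM_props(1)[OF Q] .
  have "N \<in> \<Union>Q" using U N by simp
  then obtain B where B: "B \<in> Q" "N \<in> B" by blast
  obtain a b where ab: "B = {a..b}" "card B = 1 \<or> card B = 2"
  proof -
    have "\<exists>a b. B = {a..b} \<and> (card B = 1 \<or> card B = 2)"
      using Q B(1) unfolding layered_matchings_def by blast
    thus ?thesis using that by blast
  qed
  have sub: "B \<subseteq> {1..N}" using LM_props(2)[OF Q B(1)] by simp
  have aN: "a \<le> N" and "N \<le> b" using ab(1) B(2) by auto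
  hence "b \<in> B" using ab(1) by simp
  hence "b \<le> N" using sub by auto
  hence "b = N" using \<open>N \<le> b\<close> by simp
  have "a \<in> B" using ab(1) aN \<open>b = N\<close> by simp
  hence a1: "1 \<le> a" using sub by auto
  define c where "c = card B"
  have cB: "c = Suc N - a" using ab(1) \<open>b = N\<close> by (simp add: c_def)
  have c12: "c = 1 \<or> c = 2" using ab(2) c_def by auto
  have cN: "c \<le> N" using cB a1 aN by auto
  have e1: "Suc (N - c) = a" "N - c + c = N" using cB a1 aN by arith+
  have Bblk: "B = blk (N - c) c" unfolding blk_def e1 using ab(1) \<open>b = N\<close> by simp
  have pa: "partition_on {1..N} Q" using Q by (simp add: layered_matchings_def)
  have Qe: "Q = insert B (Q - {B})" using B(1) by auto
  have dj: "disjnt B (\<Union>(Q - {B}))"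
    using LM_props(4)[OF Q] B(1) by (auto simp: disjnt_def disjoint_def)
  have "partition_on ({1..N} - B) (Q - {B})"
    using pa partition_on_insert[OF dj, of "{1..N}"] Qe by simp
  moreover have "{1..N} - B = {1..N - c}" using Bblk cN e1 unfolding blk_def by auto
  ultimately have "Q - {B} \<in> LM (N - c)"
    using Q by (auto simp: layered_matchings_def)
  thus ?thesis using c12 cN Bblk B(1) by blast
qed



definition SS :: "nat set set \<Rightarrow> (nat \<times> nat set) set" where
  "SS P = {(b, C). \<exists>B\<in>P. b \<in> B \<and> C \<in> P \<and> Min B < Min C \<and> b < Max C}"

lemma rb_insert:
  assumes P: "P \<in> LM m" and c: "1 \<le> c"
  shows "rb (insert (blk m c) P) = rb P + m"
proof -
  let ?C = "blk m c"
  have U: "\<Union>P = {1..m}" using LM_props(1)[OF P] .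
  have Bp: "\<And>B. B \<in> P \<Longrightarrow> B \<noteq> {} \<and> B \<subseteq> {1..m} \<and> finite B" using LM_props(2)[OF P] .
  have MinB: "\<And>B. B \<in> P \<Longrightarrow> Min B \<le> m"
  proof -
    fix B assume "B \<in> P"
    with Bp have "Min B \<in> B" "B \<subseteq> {1..m}" by auto
    thus "Min B \<le> m" by auto
  qed
  have MinC: "Min ?C = Suc m" using c unfolding blk_def by (intro Min_eqI) auto
  have MaxC: "Max ?C = m + c" using c unfolding blk_def by (intro Max_eqI) auto
  have notin: "?C \<notin> P" using blk_notin[OF P c] .
  have eq: "SS (insert ?C P) = SS P \<union> ({1..m} \<times> {?C})"
  proof (intro equalityI subsetI)
    fix x assume "x \<in> SS (insert ?C P)"
    then obtain b C B where x: "x = (b, C)" "B \<in> insert ?C P" "b \<in> B" "C \<in> insert ?C P"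
      "Min B < Min C" "b < Max C" unfolding SS_def by blast
    show "x \<in> SS P \<union> ({1..m} \<times> {?C})"
    proof (cases "B = ?C")
      case True
      have "C \<noteq> ?C" using x True by auto
      hence "C \<in> P" using x by auto
      hence False using MinB[of C] x True MinC by auto
      thus ?thesis ..
    next
      case False
      hence B: "B \<in> P" using x by auto
      have "B \<subseteq> {1..m}" using Bp B by blast
      hence "b \<in> {1..m}" using x(3) by blast
      thus ?thesis using x B unfolding SS_def by (cases "C = ?C") auto
    qed
  next
    fix x assume "x \<in> SS P \<union> ({1..m} \<times> {?C})"
    then show "x \<in> SS (insert ?C P)"
    proof
      assume "x \<in> SS P" thus ?thesis unfolding SS_def by blast
    next
      assume "x \<in> {1..m} \<times> {?C}"
      then obtain b where b: "x = (b, ?C)" "b \<in> {1..m}" by auto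
      then obtain B where B: "B \<in> P" "b \<in> B" using U by blast
      have "Min B < Min ?C" using MinB[OF B(1)] MinC by simp
      moreover have "b < Max ?C" using b MaxC c by auto
      ultimately show ?thesis using b B unfolding SS_def by blast
    qed
  qed
  have fin: "finite (SS P)"
  proof (rule finite_subset)
    show "SS P \<subseteq> {1..m} \<times> P" unfolding SS_def using U by auto
    show "finite ({1..m} \<times> P)" using LM_props(3)[OF P] by simp
  qed
  have dis: "SS P \<inter> ({1..m} \<times> {?C}) = {}" using notin unfolding SS_def by auto
  have "rb (insert ?C P) = card (SS (insert ?C P))" by (simp add: rb_def SS_def)
  also have "\<dots> = card (SS P) + m" unfolding eq using card_Un_disjoint[OF fin _ dis] by simp
  finally show ?thesis by (simp add: rb_def SS_def)
qed

lemma cnt_insert: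
  assumes P: "P \<in> LM m" and c: "1 \<le> c"
  shows "doubles (insert (blk m c) P) = doubles P + (if c = 2 then 1 else 0)"
        "singles (insert (blk m c) P) = singles P + (if c = 1 then 1 else 0)"
proof -
  have notin: "blk m c \<notin> P" using blk_notin[OF P c] .
  have f: "finite P" using LM_props(3)[OF P] .
  have "{B \<in> insert (blk m c) P. card B = 2} = (if c = 2 then insert (blk m c) {B\<in>P. card B = 2} else {B\<in>P. card B = 2})"
    by auto
  thus "doubles (insert (blk m c) P) = doubles P + (if c = 2 then 1 else 0)"
    using notin f by (cases "c = 2") (simp_all add: doubles_def)
  have "{B \<in> insert (blk m c) P. card B = 1} = (if c = 1 then insert (blk m c) {B\<in>P. card B = 1} else {B\<in>P. card B = 1})"
    by auto
  thus "singles (insert (blk m c) P) = singles P + (if c = 1 then 1 else 0)"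
    using notin f by (cases "c = 1") (simp_all add: singles_def)
qed

lemma LM_Suc0: "LM (Suc 0) = insert (blk 0 1) ` LM 0"
proof
  show "insert (blk 0 1) ` LM 0 \<subseteq> LM (Suc 0)"
  proof (rule image_subsetI)
    fix P assume "P \<in> LM 0"
    from add_block[OF this, of 1] show "insert (blk 0 1) P \<in> LM (Suc 0)" by simp
  qed
  show "LM (Suc 0) \<subseteq> insert (blk 0 1) ` LM 0"
  proof
    fix Q assume Q: "Q \<in> LM (Suc 0)"
    from remove_block[OF Q] obtain c where c: "c = 1 \<or> c = 2" "c \<le> Suc 0" "blk (Suc 0 - c) c \<in> Q"
      "Q - {blk (Suc 0 - c) c} \<in> LM (Suc 0 - c)" by auto
    hence c1: "c = 1" by auto
    have "Q - {blk 0 1} \<in> LM 0" using c c1 by simp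
    moreover have "Q = insert (blk 0 1) (Q - {blk 0 1})" using c c1 by (simp add: insert_absorb)
    ultimately show "Q \<in> insert (blk 0 1) ` LM 0" by (rule rev_image_eqI)
  qed
qed

lemma LM_SS:
  "LM (Suc (Suc n)) = insert (blk (Suc n) 1) ` LM (Suc n) \<union> insert (blk n 2) ` LM n"
proof
  show "insert (blk (Suc n) 1) ` LM (Suc n) \<union> insert (blk n 2) ` LM n \<subseteq> LM (Suc (Suc n))"
  proof (rule Un_least; rule image_subsetI)
    fix P assume "P \<in> LM (Suc n)"
    from add_block[OF this, of 1] show "insert (blk (Suc n) 1) P \<in> LM (Suc (Suc n))" by simp
  next
    fix P assume "P \<in> LM n"
    from add_block[OF this, of 2] show "insert (blk n 2) P \<in> LM (Suc (Suc n))" by simp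
  qed
  show "LM (Suc (Suc n)) \<subseteq> insert (blk (Suc n) 1) ` LM (Suc n) \<union> insert (blk n 2) ` LM n"
  proof
    fix Q assume Q: "Q \<in> LM (Suc (Suc n))"
    from remove_block[OF Q] obtain c where c: "c = 1 \<or> c = 2" "blk (Suc (Suc n) - c) c \<in> Q"
      "Q - {blk (Suc (Suc n) - c) c} \<in> LM (Suc (Suc n) - c)" by auto
    show "Q \<in> insert (blk (Suc n) 1) ` LM (Suc n) \<union> insert (blk n 2) ` LM n"
    proof (cases "c = 1")
      case True
      have "Q - {blk (Suc n) 1} \<in> LM (Suc n)" using c True by simp
      moreover have "Q = insert (blk (Suc n) 1) (Q - {blk (Suc n) 1})" using c True by (simp add: insert_absorb)
      ultimately have "Q \<in> insert (blk (Suc n) 1) ` LM (Suc n)" by (rule rev_image_eqI)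
      thus ?thesis by blast
    next
      case False
      hence c2: "c = 2" using c by auto
      have "Q - {blk n 2} \<in> LM n" using c c2 by simp
      moreover have "Q = insert (blk n 2) (Q - {blk n 2})" using c c2 by (simp add: insert_absorb)
      ultimately have "Q \<in> insert (blk n 2) ` LM n" by (rule rev_image_eqI)
      thus ?thesis by blast
    qed
  qed
qed

lemma inj_ins: "1 \<le> c \<Longrightarrow> inj_on (insert (blk m c)) (LM m)"
proof (rule inj_onI)
  fix P P' assume "1 \<le> c" "P \<in> LM m" "P' \<in> LM m" "insert (blk m c) P = insert (blk m c) P'"
  moreover have "blk m c \<notin> P" "blk m c \<notin> P'" using blk_notin calculation by auto
  ultimately show "P = P'" by (metis insert_ident)
qed

lemma disj_imgs: "insert (blk (Suc n) 1) ` LM (Suc n) \<inter> insert (blk n 2) ` LM n = {}"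
proof -
  { fix P P' assume P: "P \<in> LM (Suc n)" and P': "P' \<in> LM n"
      and e: "insert (blk (Suc n) 1) P = insert (blk n 2) P'"
    have "blk (Suc n) 1 \<in> insert (blk n 2) P'" using e by auto
    moreover have "Suc n \<in> blk n 2" "Suc n \<notin> blk (Suc n) 1" by (simp_all add: blk_def)
    hence "blk (Suc n) 1 \<noteq> blk n 2" by blast
    moreover have "Suc (Suc n) \<in> blk (Suc n) 1" by (simp add: blk_def)
    have "blk (Suc n) 1 \<notin> P'"
    proof
      assume "blk (Suc n) 1 \<in> P'"
      hence "blk (Suc n) 1 \<subseteq> {1..n}" using LM_props(2)[OF P'] by blast
      thus False using \<open>Suc (Suc n) \<in> blk (Suc n) 1\<close> by auto
    qed
    ultimately have False by simp }
  thus ?thesis by blast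
qed



definition G :: "'a::field \<Rightarrow> nat \<Rightarrow> nat \<Rightarrow> 'a" where
  "G q n k = (\<Sum>P\<in>LM n. if doubles P = k then q ^ rb P else 0)"

definition H :: "'a::field \<Rightarrow> nat \<Rightarrow> nat \<Rightarrow> 'a" where
  "H q n k = q ^ ((k choose 2) + ((n - k) choose 2)) * qbinom q (n - k) k"

lemma sum_ins:
  assumes "1 \<le> c"
  shows "(\<Sum>P\<in>insert (blk m c) ` LM m. f P) = (\<Sum>P\<in>LM m. f (insert (blk m c) P))"
  using sum.reindex[OF inj_ins[OF assms]] by simp

lemma rb_empty: "rb {} = 0" by (simp add: rb_def)
lemma doubles_empty: "doubles {} = 0" by (simp add: doubles_def)
lemma singles_empty: "singles {} = 0" by (simp add: singles_def)

lemma G0: "G q 0 k = (if k = 0 then 1 else 0)"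
  by (simp add: G_def LM_0 rb_empty doubles_empty)

lemma G1: "G q (Suc 0) k = (if k = 0 then 1 else 0)"
proof -
  have "G q (Suc 0) k = (\<Sum>P\<in>LM 0. if doubles (insert (blk 0 1) P) = k then q ^ rb (insert (blk 0 1) P) else 0)"
    unfolding G_def LM_Suc0 by (rule sum_ins) simp
  also have "\<dots> = (if k = 0 then 1 else 0)"
    using rb_insert[of "{}" 0 1] cnt_insert(1)[of "{}" 0 1] by (simp add: LM_0 rb_empty doubles_empty)
  finally show ?thesis .
qed

lemma GSS: "G q (Suc (Suc n)) k = q ^ Suc n * G q (Suc n) k + (if k = 0 then 0 else q ^ n * G q n (k - 1))"
proof -
  have f1: "finite (insert (blk (Suc n) 1) ` LM (Suc n))" using LM_finite by simp
  have f2: "finite (insert (blk n 2) ` LM n)" using LM_finite by simp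
  let ?f = "\<lambda>P. if doubles P = k then q ^ rb P else 0"
  have "G q (Suc (Suc n)) k = sum ?f (insert (blk (Suc n) 1) ` LM (Suc n)) + sum ?f (insert (blk n 2) ` LM n)"
    unfolding G_def LM_SS by (rule sum.union_disjoint[OF f1 f2 disj_imgs])
  also have "sum ?f (insert (blk (Suc n) 1) ` LM (Suc n)) = (\<Sum>P\<in>LM (Suc n). ?f (insert (blk (Suc n) 1) P))"
    by (rule sum_ins) simp
  also have "\<dots> = (\<Sum>P\<in>LM (Suc n). q ^ Suc n * (if doubles P = k then q ^ rb P else 0))"
    by (rule sum.cong) (simp_all add: rb_insert cnt_insert power_add)
  also have "\<dots> = q ^ Suc n * G q (Suc n) k" by (simp add: G_def sum_distrib_left)
  also have "sum ?f (insert (blk n 2) ` LM n) = (\<Sum>P\<in>LM n. ?f (insert (blk n 2) P))"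
    by (rule sum_ins) simp
  also have "\<dots> = (\<Sum>P\<in>LM n. if k = 0 then 0 else q ^ n * (if doubles P = k - 1 then q ^ rb P else 0))"
    by (rule sum.cong) (auto simp: rb_insert cnt_insert power_add)
  also have "\<dots> = (if k = 0 then 0 else q ^ n * G q n (k - 1))" by (simp add: G_def sum_distrib_left)
  finally show ?thesis .
qed

lemma sd: "P \<in> LM n \<Longrightarrow> singles P + 2 * doubles P = n"
proof (induction n arbitrary: P rule: less_induct)
  case (less n)
  show ?case
  proof (cases n)
    case 0 thus ?thesis using less.prems by (simp add: LM_0 singles_empty doubles_empty)
  next
    case (Suc n')
    show ?thesis
    proof (cases n')
      case 0
      then obtain P0 where "P0 \<in> LM 0" "P = insert (blk 0 1) P0" using less.prems Suc LM_Suc0 by auto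
      thus ?thesis using cnt_insert[of P0 0 1] Suc 0 by (simp add: LM_0 singles_empty doubles_empty)
    next
      case (Suc n'')
      have "P \<in> insert (blk (Suc n'') 1) ` LM (Suc n'') \<union> insert (blk n'' 2) ` LM n''"
        using less.prems \<open>n = Suc n'\<close> Suc LM_SS by simp
      thus ?thesis
      proof
        assume "P \<in> insert (blk (Suc n'') 1) ` LM (Suc n'')"
        then obtain P0 where P0: "P0 \<in> LM (Suc n'')" "P = insert (blk (Suc n'') 1) P0" by auto
        have "singles P0 + 2 * doubles P0 = Suc n''" using less.IH P0(1) \<open>n = Suc n'\<close> Suc by simp
        thus ?thesis using cnt_insert[OF P0(1), of 1] P0(2) \<open>n = Suc n'\<close> Suc by simp
      next
        assume "P \<in> insert (blk n'' 2) ` LM n''"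
        then obtain P0 where P0: "P0 \<in> LM n''" "P = insert (blk n'' 2) P0" by auto
        have "singles P0 + 2 * doubles P0 = n''" using less.IH P0(1) \<open>n = Suc n'\<close> Suc by simp
        thus ?thesis using cnt_insert[OF P0(1), of 2] P0(2) \<open>n = Suc n'\<close> Suc by simp
      qed
    qed
  qed
qed

lemma ch2: "Suc m choose 2 = m + (m choose 2)"
  by (simp add: numeral_2_eq_2)

lemma GH: "\<forall>i\<in>{1..n}. (q::'a::field) ^ i \<noteq> 1 \<Longrightarrow> G q n k = H q n k"
proof (induction n arbitrary: k rule: less_induct)
  case (less N)
  show ?case
  proof (cases N)
    case 0 thus ?thesis by (cases k) (simp_all add: G0 H_def binomial_eq_0)
  next
    case (Suc N')
    show ?thesis
    proof (cases N')
      case 0 thus ?thesis using Suc by (cases k) (simp_all add: G1 H_def binomial_eq_0)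
    next
      case (Suc n)
      have N: "N = Suc (Suc n)" using \<open>N = Suc N'\<close> Suc by simp
      have IH1: "\<And>k. G q (Suc n) k = H q (Suc n) k" using less N by auto
      have IH0: "\<And>k. G q n k = H q n k" using less N by auto
      show ?thesis
      proof (cases k)
        case 0
        have "Suc (Suc n) choose 2 = Suc n + (Suc n choose 2)" by (rule ch2)
        thus ?thesis using 0 N by (simp add: GSS IH1 H_def power_add)
      next
        case (Suc j)
        show ?thesis
        proof (cases "j \<le> n \<and> Suc j \<le> Suc n - j")
          case False
          hence z1: "qbinom q (Suc n - j) (Suc j) = 0" by auto
          have z2: "qbinom q (Suc n - Suc j) (Suc j) = 0" using False by auto
          have z3: "qbinom q (n - j) j = 0" using False by auto
          show ?thesis using N Suc z1 z2 z3 by (simp add: GSS IH1 IH0 H_def)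
        next
          case True
          define l where "l = n - j"
          have nl: "n = j + l" and m: "Suc n - j = Suc l" "Suc n - Suc j = l" using True l_def by auto
          have kl: "Suc j \<le> Suc l" using True m by simp
          have hyp: "\<forall>i\<in>{1..Suc j}. q ^ i \<noteq> 1" using less.prems N True by auto
          have qp: "qbinom q (Suc l) (Suc j) = q ^ Suc j * qbinom q l (Suc j) + qbinom q l j"
            using qpascal[OF hyp _ kl] by simp
          have "G q N k = q ^ Suc n * (q ^ ((Suc j choose 2) + (l choose 2)) * qbinom q l (Suc j))
                 + q ^ n * (q ^ ((j choose 2) + (l choose 2)) * qbinom q l j)"
            using N Suc m by (simp add: GSS IH1 IH0 H_def)
          also have "\<dots> = q ^ ((Suc j choose 2) + (Suc l choose 2)) * qbinom q (Suc l) (Suc j)"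
            unfolding qp ch2 nl by (simp add: algebra_simps power_add)
          finally show ?thesis using N Suc m by (simp add: H_def)
        qed
      qed
    qed
  qed
qed

theorem theorem4p6:
  fixes x y q :: "'a::field" and n :: nat
  assumes "\<forall>i\<in>{1..n}. q ^ i \<noteq> 1"
  shows "(\<forall>k. (\<Sum>P\<in>{P\<in>layered_matchings n. doubles P = k}. q ^ rb P)
              = q ^ ((k choose 2) + ((n - k) choose 2)) * qbinom q (n - k) k)
         \<and> F n x y q = (\<Sum>k\<le>n. x ^ (n - 2 * k) * y ^ k
                          * q ^ ((k choose 2) + ((n - k) choose 2)) * qbinom q (n - k) k)"
proof -
  have P1: "\<And>k. (\<Sum>P\<in>{P\<in>layered_matchings n. doubles P = k}. q ^ rb P)
              = q ^ ((k choose 2) + ((n - k) choose 2)) * qbinom q (n - k) k"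
  proof -
    fix k
    have "(\<Sum>P\<in>{P\<in>layered_matchings n. doubles P = k}. q ^ rb P) = G q n k"
      unfolding G_def by (rule sum.inter_filter[OF LM_finite])
    thus "?thesis k" using GH[OF assms] by (simp add: H_def)
  qed
  have "F n x y q = (\<Sum>P\<in>LM n. x ^ (n - 2 * doubles P) * y ^ doubles P * q ^ rb P)"
    unfolding F_def
  proof (rule sum.cong)
    fix P assume "P \<in> LM n"
    from sd[OF this] have "singles P = n - 2 * doubles P" by arith
    thus "x ^ singles P * y ^ doubles P * q ^ rb P = x ^ (n - 2 * doubles P) * y ^ doubles P * q ^ rb P" by simp
  qed simp
  also have "\<dots> = (\<Sum>k\<le>n. \<Sum>P\<in>{P\<in>LM n. doubles P = k}. x ^ (n - 2 * doubles P) * y ^ doubles P * q ^ rb P)"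
  proof (rule sum.group[symmetric])
    show "finite (LM n)" by (rule LM_finite)
    show "finite {..n}" by simp
    show "doubles ` LM n \<subseteq> {..n}" using sd by fastforce
  qed
  also have "\<dots> = (\<Sum>k\<le>n. x ^ (n - 2 * k) * y ^ k * (\<Sum>P\<in>{P\<in>LM n. doubles P = k}. q ^ rb P))"
    by (rule sum.cong) (simp_all add: sum_distrib_left mult.assoc)
  also have "\<dots> = (\<Sum>k\<le>n. x ^ (n - 2 * k) * y ^ k
                          * q ^ ((k choose 2) + ((n - k) choose 2)) * qbinom q (n - k) k)"
    by (simp add: P1 mult.assoc)
  finally show ?thesis using P1 by simp
qed

end
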